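(* (i) If the communicated systems are qubits composed according to quantum theory (i.e. $k$ qubits form the quantum system on $(\mathbb{C}^2)^{\otimes k}$), then the game $\mathcal{P}_D^{[12]}$ cannot be won perfectly with $3$ qubits but can be won perfectly with $4$ qubits; hence $4$ qubits of communication are required. (ii) In the $SEP$ composition $\mathbb{C}^2\otimes_{\min}\mathbb{C}^2$ of two qubits, the twelve product states $$\mathcal{A}=\{|\kappa\kappa\rangle,\ |\kappa\bar\kappa\rangle,\ |\bar\kappa\kappa\rangle,\ |\bar\kappa\bar\kappa\rangle\}_{\kappa\in\{x,y,z\}}$$ (as density operators) are pairwise distinguishable; consequently two $SEP$-bits suffice to win $\mathcal{P}_D^{[12]}$ perfectly.
   Context: A quantum system on Hilbert space $\mathcal{H}$ has states the density operators on $\mathcal{H}$ and measurements the POVMs. $SEP$ composition of $m$ qubits ($m$ "$SEP$-bits"; for $m=2$ written $\mathbb{C}^2\otimes_{\min}\mathbb{C}^2$): the state cone is the set of finite sums of tensor products $\pi_1\otimes\cdots\otimes\pi_m$ of positive semidefinite operators on $\mathbb{C}^2$; normalized states are the fully separable density operators on $(\mathbb{C}^2)^{\otimes m}$; the effect cone is its dual $\{Y \text{ Hermitian}: \operatorname{Tr}(XY)\ge 0 \text{ for all } X \text{ in the state cone}\}$; a measurement is a finite family of elements of the dual cone summing to the identity, with outcome probabilities $\operatorname{Tr}(E_i\rho)$. A set of states $\{\omega_i\}$ is pairwise distinguishable if for every $i\neq j$ there is a two-outcome measurement $\{E,\mathbf 1-E\}$ with $\operatorname{Tr}(E\omega_i)=1$,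 $\operatorname{Tr}(E\omega_j)=0$. Here $|\alpha\beta\rangle=|\alpha\rangle\otimes|\beta\rangle$ and $|\kappa\rangle$ ($|\bar\kappa\rangle$) is the eigenvector of the Pauli operator $\sigma_\kappa$ with eigenvalue $+1$ ($-1$). The game $\mathcal{P}_D^{[n]}$: a referee gives Alice a message $\eta$ from a set $\mathcal{N}$, $|\mathcal{N}|=n$, and asks Bob whether Alice's message was $\eta$ or $\eta'$ for some $\eta'\neq\eta$; Alice and Bob share no correlations, Alice encodes $\eta$ into a state $\omega_\eta$ of the communicated system and sends it to Bob, who for each unordered pair $\{\eta,\eta'\}$ performs a measurement whose outcome is his answer; perfect winning means Bob answers correctly with probability $1$ for every $\eta$ and every $\eta'\neq\eta$. *)

theory Defs
  imports Complex_Main "Jordan_Normal_Form.Matrix"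
begin

definition mtrace :: "complex mat \<Rightarrow> complex" where
  "mtrace A = (\<Sum>i<dim_row A. A $$ (i, i))"

definition hermitian :: "nat \<Rightarrow> complex mat \<Rightarrow> bool" where
  "hermitian d A \<longleftrightarrow> A \<in> carrier_mat d d \<and> (\<forall>i<d. \<forall>j<d. A $$ (j, i) = cnj (A $$ (i, j)))"

definition psd :: "nat \<Rightarrow> complex mat \<Rightarrow> bool" where
  "psd d A \<longleftrightarrow> A \<in> carrier_mat d d \<and>
     (\<forall>v \<in> carrier_vec d.
        Im (\<Sum>i<d. \<Sum>j<d. cnj (v $ i) * A $$ (i, j) * v $ j) = 0 \<and>
        Re (\<Sum>i<d. \<Sum>j<d. cnj (v $ i) * A $$ (i, j) * v $ j) \<ge> 0)"

definition density :: "nat \<Rightarrow> complex mat \<Rightarrow> bool" where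
  "density d \<rho> \<longleftrightarrow> psd d \<rho> \<and> mtrace \<rho> = 1"

text \<open>For every
  (unordered) pair {eta, eta'} Bob performs a two-outcome measurement whose outcomes are
  labelled by the answers eta, eta' (effects in Eff summing to the identity); perfect
  winning: he answers correctly with probability 1 whichever of the two was sent.\<close>
definition wins_PD :: "nat \<Rightarrow> nat \<Rightarrow> complex mat set \<Rightarrow> complex mat set \<Rightarrow> bool" where
  "wins_PD n d S Eff \<longleftrightarrow>
     (\<exists>\<omega> :: nat \<Rightarrow> complex mat.
        (\<forall>\<eta><n. \<omega> \<eta> \<in> S) \<and>
        (\<forall>\<eta><n. \<forall>\<eta>'<n. \<eta> \<noteq> \<eta>' \<longrightarrow>
           (\<exists>E :: nat \<Rightarrow> complex mat.
              E \<eta> \<in> Eff \<and> E \<eta>' \<in> Eff \<and> E \<eta> + E \<eta>' = 1\<^sub>m d \<and>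
              mtrace (E \<eta> * \<omega> \<eta>) = 1 \<and> mtrace (E \<eta>' * \<omega> \<eta>') = 1)))"

section \<open>Quantum composition of k qubits: system on (C^2)^(tensor k) = C^(2^k)\<close>

definition qstates :: "nat \<Rightarrow> complex mat set" where
  "qstates k = {\<rho>. density (2 ^ k) \<rho>}"

definition qeffects :: "nat \<Rightarrow> complex mat set" where
  "qeffects k = {E. psd (2 ^ k) E}"

definition wins_PD_qubits :: "nat \<Rightarrow> nat \<Rightarrow> bool" where
  "wins_PD_qubits n k \<longleftrightarrow> wins_PD n (2 ^ k) (qstates k) (qeffects k)"

text \<open>Kronecker product of 2x2 matrices; basis |ab> has index 2a+b\<close>
definition kron2 :: "complex mat \<Rightarrow> complex mat \<Rightarrow> complex mat" where
  "kron2 A B = mat 4 4 (\<lambda>(r, c). A $$ (r div 2, c div 2) * B $$ (r mod 2, c mod 2))"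

definition sep_cone :: "complex mat set" where
  "sep_cone = {X. \<exists>(m::nat) P Q. (\<forall>i<m. psd 2 (P i) \<and> psd 2 (Q i)) \<and>
                  X = mat 4 4 (\<lambda>rc. \<Sum>i<m. kron2 (P i) (Q i) $$ rc)}"

definition sep_states :: "complex mat set" where
  "sep_states = {X \<in> sep_cone. mtrace X = 1}"

definition sep_effects :: "complex mat set" where
  "sep_effects = {Y. hermitian 4 Y \<and>
     (\<forall>X \<in> sep_cone. Im (mtrace (X * Y)) = 0 \<and> Re (mtrace (X * Y)) \<ge> 0)}"

definition sep_pairwise_distinguishable :: "'i set \<Rightarrow> ('i \<Rightarrow> complex mat) \<Rightarrow> bool" where
  "sep_pairwise_distinguishable I \<omega> \<longleftrightarrow>
     (\<forall>i\<in>I. \<forall>j\<in>I. i \<noteq> j \<longrightarrow>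
        (\<exists>E. E \<in> sep_effects \<and> 1\<^sub>m 4 - E \<in> sep_effects \<and>
             mtrace (E * \<omega> i) = 1 \<and> mtrace (E * \<omega> j) = 0))"

datatype pauli = PX | PY | PZ

text \<open>ket k False = |k> (eigenvalue +1 of sigma_k), ket k True = |k-bar> (eigenvalue -1)\<close>
definition ket :: "pauli \<Rightarrow> bool \<Rightarrow> complex vec" where
  "ket k b = (let s = complex_of_real (1 / sqrt 2) in
     (case (k, b) of
        (PX, False) \<Rightarrow> vec_of_list [s, s]
      | (PX, True)  \<Rightarrow> vec_of_list [s, - s]
      | (PY, False) \<Rightarrow> vec_of_list [s, \<i> * s]
      | (PY, True)  \<Rightarrow> vec_of_list [s, - \<i> * s]
      | (PZ, False) \<Rightarrow> vec_of_list [1, 0]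
      | (PZ, True)  \<Rightarrow> vec_of_list [0, 1]))"

definition ket2 :: "complex vec \<Rightarrow> complex vec \<Rightarrow> complex vec" where
  "ket2 a b = vec 4 (\<lambda>i. a $ (i div 2) * b $ (i mod 2))"

definition proj4 :: "complex vec \<Rightarrow> complex mat" where
  "proj4 v = mat 4 4 (\<lambda>(i, j). v $ i * cnj (v $ j))"

text \<open>A_state (k, b1, b2) = density operator of |k^(b1) k^(b2)>; 12 indices\<close>
definition A_state :: "pauli \<times> bool \<times> bool \<Rightarrow> complex mat" where
  "A_state = (\<lambda>(k, b1, b2). proj4 (ket2 (ket k b1) (ket k b2)))"

end

theory Submission
  imports Defs
begin


definition bf :: "nat \<Rightarrow> (nat \<Rightarrow> nat \<Rightarrow> complex) \<Rightarrow> (nat \<Rightarrow> complex) \<Rightarrow> (nat \<Rightarrow> complex) \<Rightarrow> complex" where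
  "bf d F y x = (\<Sum>i<d. \<Sum>j<d. cnj (y i) * F i j * x j)"

definition psdf :: "nat \<Rightarrow> (nat \<Rightarrow> nat \<Rightarrow> complex) \<Rightarrow> bool" where
  "psdf d F \<longleftrightarrow> (\<forall>x. Im (bf d F x x) = 0 \<and> Re (bf d F x x) \<ge> 0)"

definition dl :: "nat \<Rightarrow> nat \<Rightarrow> complex" where "dl i = (\<lambda>k. if k = i then 1 else 0)"

lemma bf_add1: "bf d F (\<lambda>k. y k + z k) x = bf d F y x + bf d F z x"
  unfolding bf_def by (simp add: algebra_simps sum.distrib)
lemma bf_add2: "bf d F y (\<lambda>k. x k + z k) = bf d F y x + bf d F y z"
  unfolding bf_def by (simp add: algebra_simps sum.distrib)
lemma bf_smult1: "bf d F (\<lambda>k. c * y k) x = cnj c * bf d F y x"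
  unfolding bf_def by (simp add: algebra_simps sum_distrib_left)
lemma bf_smult2: "bf d F y (\<lambda>k. c * x k) = c * bf d F y x"
  unfolding bf_def by (simp add: algebra_simps sum_distrib_left)

lemma cnj_sq: "cnj z * z = complex_of_real ((cmod z)^2)"
  using complex_norm_square[of z] by (simp add: mult.commute)

lemma mult_if01: "(x::complex) * (if P then 1 else 0) = (if P then x else 0)" by simp

lemma bf_dl: "bf d F (dl i) (dl j) = F i j" if "i < d" "j < d"
proof -
  have "bf d F (dl i) (dl j) = (\<Sum>a<d. if a = i then (\<Sum>b<d. if b = j then F a b else 0) else 0)"
    unfolding bf_def dl_def by (intro sum.cong refl) (auto intro!: sum.cong simp: mult_if01)
  also have "\<dots> = F i j" using that by simp
  finally show ?thesis .
qed

lemma bf_Fx: "bf d F y x = (\<Sum>i<d. cnj (y i) * (\<Sum>j<d. F i j * x j))"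
  unfolding bf_def by (simp add: sum_distrib_left mult.assoc)

lemma psdf_diag: "psdf d F \<Longrightarrow> i < d \<Longrightarrow> Im (F i i) = 0 \<and> Re (F i i) \<ge> 0"
  unfolding psdf_def using bf_dl[of i d i F] by metis

lemma psdf_herm: assumes "psdf d F" "i < d" "j < d" shows "F j i = cnj (F i j)"
proof (cases "i = j")
  case True then show ?thesis using psdf_diag[OF assms(1,2)] by (simp add: complex_eq_iff)
next
  case False
  have e1: "bf d F (\<lambda>k. dl i k + c * dl j k) (\<lambda>k. dl i k + c * dl j k)
        = F i i + c * F i j + cnj c * F j i + cnj c * c * F j j" for c
    unfolding bf_add1 bf_add2 bf_smult1 bf_smult2 bf_dl[OF assms(2,2)] bf_dl[OF assms(2,3)]
      bf_dl[OF assms(3,2)] bf_dl[OF assms(3,3)] by (simp add: algebra_simps)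
  have P: "\<And>x. Im (bf d F x x) = 0" using assms(1) psdf_def by blast
  have "Im (F i i + 1 * F i j + cnj 1 * F j i + cnj 1 * 1 * F j j) = 0"
    using P[of "\<lambda>k. dl i k + 1 * dl j k"] unfolding e1 .
  moreover have "Im (F i i + \<i> * F i j + cnj \<i> * F j i + cnj \<i> * \<i> * F j j) = 0"
    using P[of "\<lambda>k. dl i k + \<i> * dl j k"] unfolding e1 .
  ultimately have "Im (F i j + F j i) = 0" "Re (F i j - F j i) = 0"
    using psdf_diag[OF assms(1,2)] psdf_diag[OF assms(1,3)] by simp_all
  then have "Re (F j i) = Re (F i j)" "Im (F j i) = - Im (F i j)" by simp_all
  then show ?thesis by (simp add: complex_eq_iff)
qed

lemma bf_conj: assumes "psdf d F" shows "bf d F y x = cnj (bf d F x y)"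
proof -
  have "cnj (bf d F x y) = (\<Sum>i<d. \<Sum>j<d. x i * cnj (F i j) * cnj (y j))"
    unfolding bf_def by simp
  also have "\<dots> = (\<Sum>i<d. \<Sum>j<d. cnj (y j) * F j i * x i)"
  proof (intro sum.cong refl)
    fix i j assume "i \<in> {..<d}" "j \<in> {..<d}"
    then have "F j i = cnj (F i j)" by (intro psdf_herm[OF assms]) auto
    then show "x i * cnj (F i j) * cnj (y j) = cnj (y j) * F j i * x i" by simp
  qed
  also have "\<dots> = bf d F y x" unfolding bf_def by (rule sum.swap)
  finally show ?thesis by simp
qed

lemma psdf_zero: assumes "psdf d F" "bf d F x x = 0" "i < d"
  shows "(\<Sum>j<d. F i j * x j) = 0"
proof -
  define w where "w = (\<lambda>i. \<Sum>j<d. F i j * x j)"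
  define N where "N = (\<Sum>i<d. (cmod (w i))^2)"
  have wi: "\<And>i. (\<Sum>j<d. F i j * x j) = w i" by (simp add: w_def)
  have bwx: "bf d F w x = of_real N"
    unfolding bf_Fx N_def w_def[symmetric] of_real_sum
    by (intro sum.cong refl) (simp only: wi cnj_sq)
  have bxw: "bf d F x w = of_real N" using bf_conj[OF assms(1), of x w] bwx by simp
  define q where "q = Re (bf d F w w)"
  have q: "q \<ge> 0" "bf d F w w = of_real q" using assms(1) unfolding psdf_def q_def
    by (auto simp: complex_eq_iff)
  have N0: "N \<ge> 0" unfolding N_def by (intro sum_nonneg) auto
  define t where "t = - N / (q + 1)"
  have "bf d F (\<lambda>k. x k + of_real t * w k) (\<lambda>k. x k + of_real t * w k)
       = of_real (2 * t * N + t * t * q)"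
    by (simp add: bf_add1 bf_add2 bf_smult1 bf_smult2 assms(2) bwx bxw q algebra_simps)
  hence ge: "2 * t * N + t * t * q \<ge> 0" using assms(1) unfolding psdf_def by (metis Re_complex_of_real)
  have tr: "t * (q+1) = -N" using q(1) by (simp add: t_def)
  have "(q+1)^2 * (2 * t * N + t * t * q) = 2*N*(t*(q+1))*(q+1) + (t*(q+1))*(t*(q+1))*q"
    by (simp add: algebra_simps power2_eq_square)
  also have "\<dots> = - (N * N * (q + 2))" unfolding tr by (simp add: algebra_simps)
  finally have eq: "(q+1)^2 * (2 * t * N + t * t * q) = - (N * N * (q + 2))" .
  have "(q+1)^2 * (2 * t * N + t * t * q) \<ge> 0" using ge by simp
  hence "- (N * N * (q + 2)) \<ge> 0" using eq by simp
  moreover have "N * N * (q + 2) \<ge> 0" using q(1) N0 by simp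
  ultimately have "N * N * (q + 2) = 0" by linarith
  hence "N = 0" using q(1) by simp
  hence "(\<Sum>i<d. (cmod (w i))^2) = 0" unfolding N_def .
  hence "\<forall>i\<in>{..<d}. (cmod (w i))^2 = 0" by (subst (asm) sum_nonneg_eq_0_iff) auto
  hence "(cmod (w i))^2 = 0" using assms(3) by simp
  thus ?thesis unfolding w_def by simp
qed



definition tr :: "nat \<Rightarrow> (nat \<Rightarrow> nat \<Rightarrow> complex) \<Rightarrow> (nat \<Rightarrow> nat \<Rightarrow> complex) \<Rightarrow> complex" where
  "tr d G A = (\<Sum>i<d. \<Sum>k<d. G i k * A k i)"

lemma sum_dl: "k < d \<Longrightarrow> (\<Sum>j<d. f j * dl k j) = f k"
  unfolding dl_def by (simp add: mult_if01)

lemma psdf_col_diag: assumes "psdf d A" "k < d" "i < d" "A i k \<noteq> 0" shows "A k k \<noteq> 0"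
proof
  assume "A k k = 0"
  hence "bf d A (dl k) (dl k) = 0" using bf_dl[OF assms(2,2)] by simp
  from psdf_zero[OF assms(1) this assms(3)] show False using assms sum_dl[of k d "A i"] by simp
qed

lemma bf_lin: "bf d F (\<lambda>k. a * x k + b * y k) (\<lambda>k. a * x k + b * y k)
   = cnj a * a * bf d F x x + cnj a * b * bf d F x y + cnj b * a * bf d F y x + cnj b * b * bf d F y y"
  by (simp add: bf_add1 bf_add2 bf_smult1 bf_smult2 algebra_simps)

lemma psdf_real: "psdf d F \<Longrightarrow> bf d F x x = of_real (Re (bf d F x x))"
  unfolding psdf_def by (simp add: complex_eq_iff)

lemma psdf_CS: assumes "psdf d F"
  shows "(cmod (bf d F y x))^2 \<le> Re (bf d F y y) * Re (bf d F x x)"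
proof -
  define c where "c = bf d F y x"
  define qy where "qy = Re (bf d F y y)"
  define qx where "qx = Re (bf d F x x)"
  have hy: "bf d F y y = of_real qy" and hx: "bf d F x x = of_real qx"
    using psdf_real[OF assms] qy_def qx_def by auto
  have qy0: "qy \<ge> 0" and qx0: "qx \<ge> 0" using assms unfolding psdf_def qy_def qx_def by auto
  have hxy: "bf d F x y = cnj c" using bf_conj[OF assms, of x y] c_def by simp
  have "bf d F (\<lambda>k. of_real qy * x k + (- c) * y k) (\<lambda>k. of_real qy * x k + (- c) * y k)
      = of_real (qy * (qy * qx - (cmod c)^2))"
  proof -
    have cc: "c * cnj c = of_real ((cmod c)^2)" using cnj_sq[of c] by (simp add: mult.commute)
    have "cnj (of_real qy) * of_real qy * of_real qx + cnj (of_real qy) * (- c) * cnj c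
        + cnj (- c) * of_real qy * c + cnj (- c) * (- c) * of_real qy
        = of_real qy * of_real qy * of_real qx - of_real qy * (c * cnj c)"
      by (simp add: algebra_simps)
    also have "\<dots> = of_real (qy * (qy * qx - (cmod c)^2))" unfolding cc by (simp add: algebra_simps)
    finally show ?thesis unfolding bf_lin hy hx hxy c_def[symmetric] .
  qed
  hence "qy * (qy * qx - (cmod c)^2) \<ge> 0" using assms unfolding psdf_def by (metis Re_complex_of_real)
  show ?thesis
  proof (cases "qy = 0")
    case True
    hence "bf d F y y = 0" using hy by simp
    from psdf_zero[OF assms this] have "\<And>i. i < d \<Longrightarrow> (\<Sum>j<d. F i j * y j) = 0" .
    hence "bf d F x y = 0" unfolding bf_Fx by simp
    hence "c = 0" using hxy by simp
    thus ?thesis unfolding c_def using qx0 qy0 by (simp add: qy_def[symmetric] qx_def[symmetric])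
  next
    case False
    hence "qy > 0" using qy0 by simp
    with \<open>qy * (qy * qx - (cmod c)^2) \<ge> 0\<close> have "qy * qx - (cmod c)^2 \<ge> 0"
      by (simp add: zero_le_mult_iff)
    thus ?thesis unfolding c_def qy_def qx_def by simp
  qed
qed



lemma sum_product2: "(\<Sum>i<d. \<Sum>j<d. (a i * b j :: complex)) = (\<Sum>i<d. a i) * (\<Sum>j<d. b j)"
  by (simp add: sum_product)

lemma bf_dl2: "k < d \<Longrightarrow> bf d A v (dl k) = (\<Sum>i<d. cnj (v i) * A i k)"
  unfolding bf_Fx by (simp add: sum_dl)

lemma chol_step:
  assumes A: "psdf d A" and k: "k < d" and Akk: "A k k \<noteq> 0"
  and s_def: "s = sqrt (Re (A k k))"
  and x_def: "x = (\<lambda>i. A i k / of_real s)"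
  and A'_def: "A' = (\<lambda>i j. A i j - x i * cnj (x j))"
  shows "psdf d A'" "\<And>i. i < d \<Longrightarrow> A' i k = 0"
    "\<And>j i. j < d \<Longrightarrow> (\<forall>i<d. A i j = 0) \<Longrightarrow> i < d \<Longrightarrow> A' i j = 0"
    "x k \<noteq> 0" "\<And>G. tr d G A = bf d G x x + tr d G A'"
proof -
  have d: "Im (A k k) = 0" "Re (A k k) \<ge> 0" using psdf_diag[OF A k] by auto
  hence pos: "Re (A k k) > 0" using Akk by (simp add: complex_eq_iff order_le_less)
  hence s0: "s > 0" unfolding s_def by simp
  have ss: "s * s = Re (A k k)" unfolding s_def using pos by simp
  have Akk': "A k k = of_real (s * s)" using d ss by (simp add: complex_eq_iff)
  show xk: "x k \<noteq> 0" unfolding x_def using Akk s0 by simp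
  have xk': "x k = of_real s" unfolding x_def Akk' using s0 by simp
  show "A' i k = 0" if "i < d" for i
    unfolding A'_def xk' using s0 by (simp add: x_def)
  show "A' i j = 0" if "j < d" "\<forall>i<d. A i j = 0" "i < d" for i j
  proof -
    have "A j k = cnj (A k j)" by (rule psdf_herm[OF A k that(1)])
    hence "x j = 0" unfolding x_def using that k by simp
    thus ?thesis unfolding A'_def using that by simp
  qed
  show "tr d G A = bf d G x x + tr d G A'" for G
  proof -
    have e: "\<And>i j. A j i = A' j i + x j * cnj (x i)" by (simp add: A'_def)
    have "tr d G A = (\<Sum>i<d. \<Sum>j<d. G i j * A' j i) + (\<Sum>i<d. \<Sum>j<d. G i j * (x j * cnj (x i)))"
      unfolding tr_def e by (simp add: distrib_left sum.distrib)
    also have "(\<Sum>i<d. \<Sum>j<d. G i j * (x j * cnj (x i))) = bf d G x x"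
      unfolding bf_def by (simp add: mult_ac)
    finally show ?thesis unfolding tr_def by simp
  qed
  show "psdf d A'" unfolding psdf_def
  proof
    fix v
    define c where "c = (\<Sum>i<d. cnj (v i) * x i)"
    have "bf d A' v v = bf d A v v - (\<Sum>i<d. \<Sum>j<d. (cnj (v i) * x i) * (cnj (x j) * v j))"
      unfolding bf_def A'_def by (simp add: algebra_simps sum_subtractf)
    also have "\<dots> = bf d A v v - c * cnj c"
      unfolding sum_product2 c_def by (simp add: mult.commute)
    finally have e: "bf d A' v v = of_real (Re (bf d A v v) - (cmod c)^2)"
      using psdf_real[OF A, of v] cnj_sq[of c] by (simp add: mult.commute)
    have "c = bf d A v (dl k) / of_real s"
      unfolding c_def bf_dl2[OF k] x_def by (simp add: sum_divide_distrib)
    hence "(cmod c)^2 = (cmod (bf d A v (dl k)))^2 / (s * s)"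
      using s0 by (simp add: norm_divide power_divide power2_eq_square)
    also have "\<dots> \<le> Re (bf d A v v) * Re (bf d A (dl k) (dl k)) / (s * s)"
      using psdf_CS[OF A, of v "dl k"] s0 by (simp add: divide_right_mono)
    also have "\<dots> = Re (bf d A v v)" unfolding bf_dl[OF k k, of A] ss[symmetric] using s0 by simp
    finally show "Im (bf d A' v v) = 0 \<and> Re (bf d A' v v) \<ge> 0" using e by simp
  qed
qed

definition nzc :: "nat \<Rightarrow> (nat \<Rightarrow> nat \<Rightarrow> complex) \<Rightarrow> nat set" where
  "nzc d A = {k. k < d \<and> (\<exists>i<d. A i k \<noteq> 0)}"

lemma fin_nzc: "finite (nzc d A)"
  by (rule finite_subset[of _ "{..<d}"]) (auto simp: nzc_def)

lemma tr_nonneg_aux: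
  assumes G: "psdf d G"
  shows "card (nzc d A) = n \<Longrightarrow> psdf d A \<Longrightarrow> Im (tr d G A) = 0 \<and> Re (tr d G A) \<ge> 0"
proof (induction n arbitrary: A rule: less_induct)
  case (less n A)
  show ?case
  proof (cases "nzc d A = {}")
    case True
    hence "\<And>i k. i < d \<Longrightarrow> k < d \<Longrightarrow> A i k = 0" unfolding nzc_def by auto
    hence "tr d G A = 0" unfolding tr_def by simp
    thus ?thesis by simp
  next
    case False
    then obtain k i where k: "k < d" "i < d" "A i k \<noteq> 0" unfolding nzc_def by auto
    have Akk: "A k k \<noteq> 0" by (rule psdf_col_diag[OF less.prems(2) k])
    define s where "s = sqrt (Re (A k k))"
    define x where "x = (\<lambda>i. A i k / of_real s)"
    define A' where "A' = (\<lambda>i j. A i j - x i * cnj (x j))"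
    note st = chol_step[OF less.prems(2) k(1) Akk s_def x_def A'_def]
    have sub: "nzc d A' \<subseteq> nzc d A - {k}"
    proof
      fix j assume j: "j \<in> nzc d A'"
      then obtain i where ji: "j < d" "i < d" "A' i j \<noteq> 0" unfolding nzc_def by auto
      have "j \<noteq> k" using st(2)[OF ji(2)] ji by auto
      moreover have "j \<in> nzc d A" using st(3)[OF ji(1) _ ji(2)] ji unfolding nzc_def by auto
      ultimately show "j \<in> nzc d A - {k}" by simp
    qed
    have "k \<in> nzc d A" using k unfolding nzc_def by auto
    hence "card (nzc d A - {k}) < card (nzc d A)"
      by (intro card_Diff1_less fin_nzc)
    moreover have "card (nzc d A') \<le> card (nzc d A - {k})"
      by (intro card_mono sub) (simp add: fin_nzc)
    ultimately have "card (nzc d A') < n" using less.prems(1) by simp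
    from less.IH[OF this refl st(1)] have "Im (tr d G A') = 0 \<and> Re (tr d G A') \<ge> 0" .
    moreover have "Im (bf d G x x) = 0 \<and> Re (bf d G x x) \<ge> 0" using G unfolding psdf_def by blast
    ultimately show ?thesis unfolding st(5) by simp
  qed
qed

lemma tr_nonneg: "psdf d G \<Longrightarrow> psdf d A \<Longrightarrow> Im (tr d G A) = 0 \<and> Re (tr d G A) \<ge> 0"
  using tr_nonneg_aux by blast

lemma support_vec:
  assumes A: "psdf d A" and k: "k < d" and Akk: "A k k \<noteq> 0"
  shows "\<exists>x. x k \<noteq> 0 \<and> (\<forall>G. psdf d G \<longrightarrow> tr d G A = 0 \<longrightarrow> (\<forall>i<d. (\<Sum>j<d. G i j * x j) = 0))"
proof -
  define s where "s = sqrt (Re (A k k))"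
  define x where "x = (\<lambda>i. A i k / of_real s)"
  define A' where "A' = (\<lambda>i j. A i j - x i * cnj (x j))"
  note st = chol_step[OF A k Akk s_def x_def A'_def]
  show ?thesis
  proof (intro exI conjI allI impI)
    show "x k \<noteq> 0" by (rule st(4))
    fix G i assume G: "psdf d G" and t: "tr d G A = 0" and i: "i < d"
    have "Im (tr d G A') = 0 \<and> Re (tr d G A') \<ge> 0" by (rule tr_nonneg[OF G st(1)])
    moreover have "Im (bf d G x x) = 0 \<and> Re (bf d G x x) \<ge> 0" using G unfolding psdf_def by blast
    ultimately have "bf d G x x = 0" using t unfolding st(5) by (simp add: complex_eq_iff)
    from psdf_zero[OF G this i] show "(\<Sum>j<d. G i j * x j) = 0" .
  qed
qed



lemma psd_psdf: assumes "psd d A" shows "psdf d (\<lambda>i j. A $$ (i, j))"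
  unfolding psdf_def
proof
  fix x :: "nat \<Rightarrow> complex"
  have v: "vec d x \<in> carrier_vec d" by simp
  have eq: "bf d (\<lambda>i j. A $$ (i, j)) x x = (\<Sum>i<d. \<Sum>j<d. cnj (vec d x $ i) * A $$ (i, j) * vec d x $ j)"
    unfolding bf_def by (intro sum.cong refl) simp
  have "Im (\<Sum>i<d. \<Sum>j<d. cnj (vec d x $ i) * A $$ (i, j) * vec d x $ j) = 0 \<and>
        Re (\<Sum>i<d. \<Sum>j<d. cnj (vec d x $ i) * A $$ (i, j) * vec d x $ j) \<ge> 0"
    using assms v unfolding psd_def by blast
  thus "Im (bf d (\<lambda>i j. A $$ (i, j)) x x) = 0 \<and> Re (bf d (\<lambda>i j. A $$ (i, j)) x x) \<ge> 0"
    unfolding eq .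
qed

lemma mtrace_mult: assumes "A \<in> carrier_mat d d" "B \<in> carrier_mat d d"
  shows "mtrace (A * B) = tr d (\<lambda>i j. A $$ (i, j)) (\<lambda>i j. B $$ (i, j))"
  unfolding mtrace_def tr_def using assms
  by (auto intro!: sum.cong simp: scalar_prod_def atLeast0LessThan)

lemma mtrace_sum: assumes "A \<in> carrier_mat d d" shows "mtrace A = (\<Sum>i<d. A $$ (i, i))"
  unfolding mtrace_def using assms by simp

lemma cnj_sq2: "z * cnj z = complex_of_real ((cmod z)^2)"
  using cnj_sq[of z] by (simp only: mult.commute)

lemma bessel:
  fixes x :: "nat \<Rightarrow> nat \<Rightarrow> complex"
  assumes nz: "\<forall>a<n. \<exists>l<d. x a l \<noteq> 0"
    and orth: "\<forall>a<n. \<forall>b<n. a \<noteq> b \<longrightarrow> (\<Sum>l<d. cnj (x a l) * x b l) = 0"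
  shows "n \<le> d"
proof -
  define N where "N = (\<lambda>a. \<Sum>l<d. (cmod (x a l))^2)"
  have Npos: "N a > 0" if an: "a < n" for a
  proof -
    obtain l where "l < d" "x a l \<noteq> 0" using nz an by auto
    hence "(cmod (x a l))^2 > 0" by simp
    moreover have "(cmod (x a l))^2 \<le> N a" unfolding N_def
      by (rule member_le_sum) (use \<open>l < d\<close> in auto)
    ultimately show ?thesis by linarith
  qed
  define u where "u = (\<lambda>a l. x a l / of_real (sqrt (N a)))"
  have un: "(\<Sum>l<d. (cmod (u a l))^2) = 1" if "a < n" for a
  proof -
    have "(\<Sum>l<d. (cmod (u a l))^2) = (\<Sum>l<d. (cmod (x a l))^2 / N a)"
      unfolding u_def using Npos[OF that]
      by (intro sum.cong refl) (simp add: norm_divide power_divide)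
    also have "\<dots> = (\<Sum>l<d. (cmod (x a l))^2) / N a" by (simp add: sum_divide_distrib)
    also have "\<dots> = N a / N a" unfolding N_def ..
    finally show ?thesis using Npos[OF that] by simp
  qed
  have ip: "(\<Sum>m<d. cnj (u a m) * u b m) = (if a = b then 1 else 0)" if "a < n" "b < n" for a b
  proof (cases "a = b")
    case True
    have "(\<Sum>m<d. cnj (u a m) * u a m) = of_real (\<Sum>m<d. (cmod (u a m))^2)"
      unfolding of_real_sum by (intro sum.cong refl) (rule cnj_sq)
    also have "\<dots> = 1" unfolding un[OF that(1)] by simp
    finally show ?thesis using True by simp
  next
    case False
    have "(\<Sum>m<d. cnj (u a m) * u b m)
        = (\<Sum>m<d. cnj (x a m) * x b m) / (of_real (sqrt (N a)) * of_real (sqrt (N b)))"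
      unfolding u_def by (simp add: sum_divide_distrib)
    thus ?thesis using orth that False by simp
  qed
  define S where "S = (\<lambda>l. \<Sum>a<n. (cmod (u a l))^2)"
  have S1: "S l \<le> 1" if "l < d" for l
  proof -
    define y where "y = (\<lambda>m. \<Sum>a<n. cnj (u a l) * u a m)"
    have "(\<Sum>m<d. cnj (y m) * y m)
        = (\<Sum>m<d. \<Sum>a<n. \<Sum>b<n. (u b l * cnj (u a l)) * (cnj (u b m) * u a m))"
      unfolding y_def by (simp add: sum_product mult_ac)
    also have "\<dots> = (\<Sum>a<n. \<Sum>b<n. (u b l * cnj (u a l)) * (\<Sum>m<d. cnj (u b m) * u a m))"
      by (simp add: sum_distrib_left sum.swap[of _ "{..<d}"])
    also have "\<dots> = (\<Sum>a<n. \<Sum>b<n. (u b l * cnj (u a l)) * (if b = a then 1 else 0))"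
      by (intro sum.cong refl) (simp add: ip)
    also have "\<dots> = (\<Sum>a<n. u a l * cnj (u a l))" by (simp add: mult_if01)
    also have "\<dots> = of_real (S l)" unfolding S_def of_real_sum
      by (intro sum.cong refl) (rule cnj_sq2)
    finally have e0: "(\<Sum>m<d. cnj (y m) * y m) = of_real (S l)" .
    have "complex_of_real (\<Sum>m<d. (cmod (y m))^2) = (\<Sum>m<d. cnj (y m) * y m)"
      unfolding of_real_sum by (intro sum.cong refl) (rule cnj_sq[symmetric])
    hence e1: "(\<Sum>m<d. (cmod (y m))^2) = S l" using e0 of_real_eq_iff by metis
    have S0: "S l \<ge> 0" unfolding S_def by (simp add: sum_nonneg)
    have yl: "y l = of_real (S l)" unfolding y_def S_def of_real_sum
      by (intro sum.cong refl) (rule cnj_sq)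
    have "(S l)^2 = (cmod (y l))^2" unfolding yl using S0 by simp
    also have "\<dots> \<le> (\<Sum>m<d. (cmod (y m))^2)"
      by (rule member_le_sum) (use that in auto)
    finally have "(S l)^2 \<le> S l" using e1 by simp
    show ?thesis
    proof (rule ccontr)
      assume "\<not> S l \<le> 1"
      hence "S l * 1 < S l * S l" by (intro mult_strict_left_mono) auto
      thus False using \<open>(S l)^2 \<le> S l\<close> by (simp add: power2_eq_square)
    qed
  qed
  have "real n = (\<Sum>a<n. \<Sum>l<d. (cmod (u a l))^2)" using un by simp
  also have "\<dots> = (\<Sum>l<d. S l)" unfolding S_def by (rule sum.swap)
  also have "\<dots> \<le> (\<Sum>l<d. 1)" by (rule sum_mono) (simp add: S1)
  finally show ?thesis by simp
qed



lemma psd_carrier: "psd d A \<Longrightarrow> A \<in> carrier_mat d d" unfolding psd_def by simp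

lemma density_support:
  assumes "density d \<omega>"
  shows "\<exists>x. (\<exists>k<d. x k \<noteq> 0) \<and> (\<forall>G. psdf d G \<longrightarrow> tr d G (\<lambda>i j. \<omega> $$ (i, j)) = 0
           \<longrightarrow> (\<forall>i<d. (\<Sum>j<d. G i j * x j) = 0))"
proof -
  have p: "psd d \<omega>" and t: "mtrace \<omega> = 1" using assms unfolding density_def by auto
  have "(\<Sum>i<d. \<omega> $$ (i, i)) = 1" using t mtrace_sum[OF psd_carrier[OF p]] by simp
  then obtain k where k: "k < d" "\<omega> $$ (k, k) \<noteq> 0"
    by (metis (no_types, lifting) sum.neutral lessThan_iff zero_neq_one)
  from support_vec[OF psd_psdf[OF p] k] k(1) show ?thesis by blast
qed

lemma game_bound:
  assumes "wins_PD n d {\<rho>. density d \<rho>} {E. psd d E}"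
  shows "n \<le> d"
proof -
  obtain \<omega> where om: "\<forall>\<eta><n. density d (\<omega> \<eta>)"
    and pr: "\<forall>\<eta><n. \<forall>\<eta>'<n. \<eta> \<noteq> \<eta>' \<longrightarrow>
           (\<exists>E :: nat \<Rightarrow> complex mat.
              psd d (E \<eta>) \<and> psd d (E \<eta>') \<and> E \<eta> + E \<eta>' = 1\<^sub>m d \<and>
              mtrace (E \<eta> * \<omega> \<eta>) = 1 \<and> mtrace (E \<eta>' * \<omega> \<eta>') = 1)"
    using assms unfolding wins_PD_def by auto
  define W where "W = (\<lambda>\<eta> i j. \<omega> \<eta> $$ (i, j))"
  have "\<forall>\<eta>. \<exists>x. \<eta> < n \<longrightarrow> (\<exists>k<d. x k \<noteq> 0) \<and> (\<forall>G. psdf d G \<longrightarrow> tr d G (W \<eta>) = 0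
           \<longrightarrow> (\<forall>i<d. (\<Sum>j<d. G i j * x j) = 0))"
    using density_support om unfolding W_def by blast
  then obtain X where X: "\<And>\<eta>. \<eta> < n \<Longrightarrow> (\<exists>k<d. X \<eta> k \<noteq> 0) \<and> (\<forall>G. psdf d G \<longrightarrow> tr d G (W \<eta>) = 0
           \<longrightarrow> (\<forall>i<d. (\<Sum>j<d. G i j * X \<eta> j) = 0))"
    by metis
  have orth: "(\<Sum>l<d. cnj (X a l) * X b l) = 0" if ab: "a < n" "b < n" "a \<noteq> b" for a b
  proof -
    obtain E where E: "psd d (E a)" "psd d (E b)" "E a + E b = 1\<^sub>m d"
      "mtrace (E a * \<omega> a) = 1" "mtrace (E b * \<omega> b) = 1"
      using pr ab by blast
    define F where "F = (\<lambda>i j. E a $$ (i, j))"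
    define F' where "F' = (\<lambda>i j. E b $$ (i, j))"
    have cA: "E a \<in> carrier_mat d d" "E b \<in> carrier_mat d d" using E psd_carrier by auto
    have cW: "\<omega> a \<in> carrier_mat d d" "\<omega> b \<in> carrier_mat d d"
      using om ab psd_carrier unfolding density_def by auto
    have FF: "F i j + F' i j = (if i = j then 1 else 0)" if "i < d" "j < d" for i j
    proof -
      have "(E a + E b) $$ (i, j) = F i j + F' i j" unfolding F_def F'_def using cA that by simp
      thus ?thesis using E(3) that by simp
    qed
    have trW: "(\<Sum>i<d. W c i i) = 1" if "c < n" for c
      using om that mtrace_sum[of "\<omega> c" d] psd_carrier unfolding density_def W_def by auto
    have t1: "tr d F (W a) = 1" using E(4) mtrace_mult[OF cA(1) cW(1)] unfolding F_def W_def by simp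
    have t2: "tr d F' (W b) = 1" using E(5) mtrace_mult[OF cA(2) cW(2)] unfolding F'_def W_def by simp
    have split: "tr d F (W c) + tr d F' (W c) = (\<Sum>i<d. W c i i)" for c
    proof -
      have "tr d F (W c) + tr d F' (W c) = (\<Sum>i<d. \<Sum>k<d. (F i k + F' i k) * W c k i)"
        unfolding tr_def by (simp add: sum.distrib algebra_simps)
      also have "\<dots> = (\<Sum>i<d. \<Sum>k<d. (if i = k then W c k i else 0))"
        by (intro sum.cong refl) (simp add: FF)
      finally show ?thesis by simp
    qed
    have t3: "tr d F' (W a) = 0" using split[of a] t1 trW[OF ab(1)] by simp
    have t4: "tr d F (W b) = 0" using split[of b] t2 trW[OF ab(2)] by simp
    have pF: "psdf d F" "psdf d F'" unfolding F_def F'_def using E(1,2) psd_psdf by auto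
    have z1: "\<And>i. i < d \<Longrightarrow> (\<Sum>j<d. F' i j * X a j) = 0" using X[OF ab(1)] pF(2) t3 by blast
    have z2: "\<And>i. i < d \<Longrightarrow> (\<Sum>j<d. F i j * X b j) = 0" using X[OF ab(2)] pF(1) t4 by blast
    have "X b l = (\<Sum>j<d. F l j * X b j) + (\<Sum>j<d. F' l j * X b j)" if "l < d" for l
    proof -
      have "(\<Sum>j<d. F l j * X b j) + (\<Sum>j<d. F' l j * X b j) = (\<Sum>j<d. (F l j + F' l j) * X b j)"
        by (simp add: sum.distrib algebra_simps)
      also have "\<dots> = (\<Sum>j<d. (if l = j then X b j else 0))"
        by (intro sum.cong refl) (simp add: FF that)
      finally show ?thesis using that by simp
    qed
    hence "X b l = (\<Sum>j<d. F' l j * X b j)" if "l < d" for l using z2 that by simp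
    hence "(\<Sum>l<d. cnj (X a l) * X b l) = bf d F' (X a) (X b)"
      unfolding bf_Fx by (intro sum.cong refl) simp
    also have "\<dots> = cnj (bf d F' (X b) (X a))" by (rule bf_conj[OF pF(2)])
    also have "bf d F' (X b) (X a) = 0" unfolding bf_Fx using z1 by simp
    finally show ?thesis by simp
  qed
  show ?thesis
    by (rule bessel[of n d X]) (use X orth in auto)
qed



definition dg :: "nat \<Rightarrow> (nat \<Rightarrow> real) \<Rightarrow> complex mat" where
  "dg d c = mat d d (\<lambda>(i, j). if i = j then complex_of_real (c i) else 0)"

lemma dg_psd: assumes "\<And>i. c i \<ge> 0" shows "psd d (dg d c)"
  unfolding psd_def
proof (intro conjI ballI)
  show "dg d c \<in> carrier_mat d d" unfolding dg_def by simp
  fix v :: "complex vec" assume "v \<in> carrier_vec d"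
  have "(\<Sum>i<d. \<Sum>j<d. cnj (v $ i) * dg d c $$ (i, j) * v $ j)
      = (\<Sum>i<d. \<Sum>j<d. if i = j then cnj (v $ i) * complex_of_real (c i) * v $ j else 0)"
    unfolding dg_def by (intro sum.cong refl) auto
  also have "\<dots> = (\<Sum>i<d. cnj (v $ i) * complex_of_real (c i) * v $ i)"
    by (intro sum.cong refl) simp
  also have "\<dots> = (\<Sum>i<d. complex_of_real (c i * (cmod (v $ i))^2))"
    by (intro sum.cong refl) (simp only: of_real_mult cnj_sq[symmetric] mult_ac)
  finally have e: "(\<Sum>i<d. \<Sum>j<d. cnj (v $ i) * dg d c $$ (i, j) * v $ j)
       = complex_of_real (\<Sum>i<d. c i * (cmod (v $ i))^2)" by simp
  show "Im (\<Sum>i<d. \<Sum>j<d. cnj (v $ i) * dg d c $$ (i, j) * v $ j) = 0" unfolding e by simp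
  show "Re (\<Sum>i<d. \<Sum>j<d. cnj (v $ i) * dg d c $$ (i, j) * v $ j) \<ge> 0" unfolding e
    using assms by (simp add: sum_nonneg)
qed

lemma dg_mult_trace: "mtrace (dg d c * dg d c') = (\<Sum>i<d. complex_of_real (c i * c' i))"
  unfolding mtrace_def dg_def
  by (auto intro!: sum.cong simp: scalar_prod_def atLeast0LessThan if_distrib cong: if_cong)

lemma dg_trace: "mtrace (dg d c) = (\<Sum>i<d. complex_of_real (c i))"
  unfolding mtrace_def dg_def by simp

lemma dg_add: "dg d c + dg d c' = dg d (\<lambda>i. c i + c' i)"
  unfolding dg_def by (rule eq_matI) auto

lemma dg_one: "dg d (\<lambda>i. 1) = 1\<^sub>m d"
  unfolding dg_def by (rule eq_matI) auto

lemma qw_state: assumes "\<eta> < d" shows "density d (dg d (\<lambda>i. if i = \<eta> then 1 else 0))"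
proof -
  have "mtrace (dg d (\<lambda>i. if i = \<eta> then 1 else 0)) = 1" unfolding dg_trace using assms
    by (simp add: if_distrib[of complex_of_real] cong: if_cong)
  thus ?thesis unfolding density_def by (auto intro!: dg_psd)
qed

lemma qw_pair: assumes \<eta>: "\<eta> < d" "\<eta>' < d" and h: "\<eta> \<noteq> \<eta>'"
  shows "\<exists>E. E \<eta> \<in> {E. psd d E} \<and> E \<eta>' \<in> {E. psd d E} \<and> E \<eta> + E \<eta>' = 1\<^sub>m d \<and>
         mtrace (E \<eta> * dg d (\<lambda>i. if i = \<eta> then 1 else 0)) = 1 \<and>
         mtrace (E \<eta>' * dg d (\<lambda>i. if i = \<eta>' then 1 else 0)) = 1"
proof -
  define P where "P = dg d (\<lambda>i. if i = \<eta> then 1 else 0)"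
  define Q where "Q = dg d (\<lambda>i. if i = \<eta> then 0 else 1)"
  have 1: "psd d P" "psd d Q" unfolding P_def Q_def by (auto intro!: dg_psd)
  have "P + Q = dg d (\<lambda>i. 1)" unfolding P_def Q_def dg_add by (intro arg_cong[of _ _ "dg d"]) auto
  hence 2: "P + Q = 1\<^sub>m d" by (simp add: dg_one)
  have 3: "mtrace (P * dg d (\<lambda>i. if i = \<eta> then 1 else 0)) = 1"
    using \<eta> unfolding P_def by (simp add: dg_mult_trace if_distrib[of complex_of_real] mult_if01 cong: if_cong)
  have 4: "mtrace (Q * dg d (\<lambda>i. if i = \<eta>' then 1 else 0)) = 1"
    using h \<eta> unfolding Q_def by (simp add: dg_mult_trace if_distrib[of complex_of_real] mult_if01 cong: if_cong)
  show ?thesis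
    by (rule exI[of _ "\<lambda>m. if m = \<eta> then P else Q"]) (use 1 2 3 4 h in auto)
qed

lemma quantum_win: assumes "n \<le> d" shows "wins_PD n d {\<rho>. density d \<rho>} {E. psd d E}"
  unfolding wins_PD_def
  apply (rule exI[of _ "\<lambda>\<eta>. dg d (\<lambda>i. if i = \<eta> then 1 else 0)"])
  using qw_state qw_pair assms by auto

lemma part1: "\<not> wins_PD_qubits 12 3 \<and> wins_PD_qubits 12 4 \<and> (\<forall>k. wins_PD_qubits 12 k \<longrightarrow> 4 \<le> k)"
proof (intro conjI allI impI)
  have eq: "wins_PD_qubits n k = wins_PD n (2^k) {\<rho>. density (2^k) \<rho>} {E. psd (2^k) E}" for n k
    unfolding wins_PD_qubits_def qstates_def qeffects_def ..
  show "\<not> wins_PD_qubits 12 3" unfolding eq using game_bound by fastforce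
  show "wins_PD_qubits 12 4" unfolding eq by (rule quantum_win) simp
  fix k assume "wins_PD_qubits 12 k"
  hence "(12::nat) \<le> 2^k" unfolding eq by (rule game_bound)
  show "4 \<le> k"
  proof (rule ccontr)
    assume "\<not> 4 \<le> k"
    hence "k \<le> 3" by simp
    hence "(2::nat)^k \<le> 2^3" by (intro power_increasing) auto
    thus False using \<open>12 \<le> 2^k\<close> by simp
  qed
qed



lemma sum4: "(\<Sum>r<(4::nat). f r :: complex) = f 0 + f 1 + f 2 + (f 3 :: complex)"
  by (simp add: eval_nat_numeral)
lemma sum2: "(\<Sum>r<(2::nat). f r :: complex) = f 0 + (f 1 :: complex)"
  by (simp add: eval_nat_numeral)

definition t2 :: "complex mat \<Rightarrow> complex mat \<Rightarrow> complex" where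
  "t2 P R = (\<Sum>a<2. \<Sum>b<2. P $$ (a, b) * R $$ (b, a))"
definition T4 :: "complex mat \<Rightarrow> complex mat \<Rightarrow> complex" where
  "T4 A B = (\<Sum>r<4. \<Sum>c<4. A $$ (r, c) * B $$ (c, r))"

lemma kron_T4: "T4 (kron2 P Q) (kron2 R S) = t2 P R * t2 Q S"
  unfolding T4_def t2_def kron2_def by (simp add: sum4 sum2 algebra_simps)

lemma T4_comm: "T4 A B = T4 B A"
  unfolding T4_def by (subst sum.swap) (simp add: mult.commute)

lemma mtrace_T4: "A \<in> carrier_mat 4 4 \<Longrightarrow> B \<in> carrier_mat 4 4 \<Longrightarrow> mtrace (A * B) = T4 A B"
  using mtrace_mult[of A 4 B] unfolding tr_def T4_def by simp

definition sge :: "nat \<Rightarrow> nat \<Rightarrow> nat \<Rightarrow> complex" where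
  "sge a i j = (if a = 0 then (if i = j then 1 else 0)
    else if a = 1 then (if i \<noteq> j then 1 else 0)
    else if a = 2 then (if i = 0 \<and> j = 1 then - \<i> else if i = 1 \<and> j = 0 then \<i> else 0)
    else (if i = 0 \<and> j = 0 then 1 else if i = 1 \<and> j = 1 then -1 else 0))"

definition sg :: "nat \<Rightarrow> complex mat" where
  "sg a = mat 2 2 (\<lambda>(i, j). sge a i j)"

definition pj :: "complex vec \<Rightarrow> complex mat" where
  "pj v = mat 2 2 (\<lambda>(i, j). v $ i * cnj (v $ j))"

definition ix :: "pauli \<Rightarrow> nat" where
  "ix k = (case k of PX \<Rightarrow> 1 | PY \<Rightarrow> 2 | PZ \<Rightarrow> 3)"

definition sgnb :: "bool \<Rightarrow> real" where "sgnb b = (if b then -1 else 1)"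

definition bl :: "pauli \<Rightarrow> bool \<Rightarrow> nat \<Rightarrow> real" where
  "bl k b a = (if a = 0 then 1 else if a = ix k then sgnb b else 0)"

lemma ket0: "ket k b $ 0 = (if k = PZ then (if b then 0 else 1) else complex_of_real (1 / sqrt 2))"
  by (cases k; cases b) (simp_all add: ket_def Let_def vec_of_list_index del: vec_of_list_Cons)

lemma ket1: "ket k b $ 1 = (if k = PZ then (if b then 1 else 0)
     else if k = PX then (if b then - complex_of_real (1 / sqrt 2) else complex_of_real (1 / sqrt 2))
     else (if b then - \<i> * complex_of_real (1 / sqrt 2) else \<i> * complex_of_real (1 / sqrt 2)))"
  by (cases k; cases b) (simp_all add: ket_def Let_def vec_of_list_index del: vec_of_list_Cons)

lemma ket1': "ket k b $ Suc 0 = (if k = PZ then (if b then 1 else 0)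
     else if k = PX then (if b then - complex_of_real (1 / sqrt 2) else complex_of_real (1 / sqrt 2))
     else (if b then - \<i> * complex_of_real (1 / sqrt 2) else \<i> * complex_of_real (1 / sqrt 2)))"
  by (cases k; cases b) (simp_all add: ket_def Let_def vec_of_list_index del: vec_of_list_Cons)

lemma s2: "complex_of_real (1 / sqrt 2) * complex_of_real (1 / sqrt 2) = 1/2"
proof -
  have "complex_of_real (1 / sqrt 2) * complex_of_real (1 / sqrt 2) = complex_of_real (1/2)"
    by (simp flip: of_real_mult)
  thus ?thesis by simp
qed

lemma sq2: "complex_of_real (sqrt 2) * complex_of_real (sqrt 2) = 2"
  by (simp flip: of_real_mult)

lemma bloch_ket: assumes "a < 4" shows "t2 (pj (ket k b)) (sg a) = complex_of_real (bl k b a)"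
proof -
  have "a = 0 \<or> a = 1 \<or> a = 2 \<or> a = 3" using assms by auto
  thus ?thesis
    by (cases k; cases b; elim disjE)
      (simp_all add: t2_def pj_def sg_def sge_def sum2 ket0 ket1 ket1' bl_def ix_def sgnb_def sq2)
qed



definition valid :: "(nat \<Rightarrow> real) \<Rightarrow> bool" where
  "valid p \<longleftrightarrow> p 0 \<ge> 0 \<and> (p 1)^2 + (p 2)^2 + (p 3)^2 \<le> (p 0)^2"

lemma t2_sg: "t2 P (sg 0) = P $$ (0,0) + P $$ (1,1)"
   "t2 P (sg 1) = P $$ (0,1) + P $$ (1,0)"
   "t2 P (sg 2) = P $$ (0,1) * \<i> - P $$ (1,0) * \<i>"
   "t2 P (sg 3) = P $$ (0,0) - P $$ (1,1)"
  by (simp_all add: t2_def sg_def sge_def sum2)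

lemma bloch_psd:
  assumes P: "psd 2 P"
  shows "\<And>a. a < 4 \<Longrightarrow> t2 P (sg a) = complex_of_real (Re (t2 P (sg a)))"
    "valid (\<lambda>a. Re (t2 P (sg a)))"
proof -
  have pf: "psdf 2 (\<lambda>i j. P $$ (i, j))" by (rule psd_psdf[OF P])
  define x where "x = Re (P $$ (0,0))"
  define y where "y = Re (P $$ (1,1))"
  define u where "u = P $$ (0,1)"
  have d0: "P $$ (0,0) = of_real x" "x \<ge> 0" using psdf_diag[OF pf, of 0] unfolding x_def
    by (auto simp: complex_eq_iff)
  have d1: "P $$ (1,1) = of_real y" "y \<ge> 0" using psdf_diag[OF pf, of 1] unfolding y_def
    by (auto simp: complex_eq_iff)
  have h: "P $$ (1,0) = cnj u" unfolding u_def using psdf_herm[OF pf, of 0 1] by simp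
  have cs: "(cmod u)^2 \<le> x * y"
    using psdf_CS[OF pf, of "dl 0" "dl 1"] bf_dl[of 0 2 1 "\<lambda>i j. P $$ (i, j)"]
      bf_dl[of 0 2 0 "\<lambda>i j. P $$ (i, j)"] bf_dl[of 1 2 1 "\<lambda>i j. P $$ (i, j)"]
    unfolding u_def x_def y_def by simp
  have vals: "t2 P (sg 0) = of_real (x + y)" "t2 P (sg 1) = of_real (2 * Re u)"
     "t2 P (sg 2) = of_real (- 2 * Im u)" "t2 P (sg 3) = of_real (x - y)"
    unfolding t2_sg d0 d1 h u_def[symmetric] by (simp_all add: complex_eq_iff)
  show "t2 P (sg a) = complex_of_real (Re (t2 P (sg a)))" if "a < 4" for a
  proof -
    have "a = 0 \<or> a = 1 \<or> a = 2 \<or> a = 3" using that by auto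
    thus ?thesis using vals by (elim disjE) simp_all
  qed
  have "(2 * Re u)^2 + (- 2 * Im u)^2 = 4 * (cmod u)^2"
    unfolding cmod_power2 by (simp add: power2_eq_square algebra_simps)
  thus "valid (\<lambda>a. Re (t2 P (sg a)))"
    unfolding valid_def vals using cs d0(2) d1(2) by (simp add: power2_eq_square algebra_simps)
qed

definition Eg :: "nat \<Rightarrow> nat \<Rightarrow> real \<Rightarrow> nat \<Rightarrow> nat \<Rightarrow> real \<Rightarrow> complex mat" where
  "Eg a b \<alpha> c e \<beta> = mat 4 4 (\<lambda>(r, s). (1/2) * (kron2 (sg 0) (sg 0) $$ (r, s)
      + complex_of_real \<alpha> * kron2 (sg a) (sg b) $$ (r, s) + complex_of_real \<beta> * kron2 (sg c) (sg e) $$ (r, s)))"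

lemma T4_Eg: "T4 X (Eg a b \<alpha> c e \<beta>) = (1/2) * (T4 X (kron2 (sg 0) (sg 0))
      + complex_of_real \<alpha> * T4 X (kron2 (sg a) (sg b)) + complex_of_real \<beta> * T4 X (kron2 (sg c) (sg e)))"
proof -
  have "T4 X (Eg a b \<alpha> c e \<beta>) = (\<Sum>r<4. \<Sum>s<4. X $$ (r, s) * ((1/2) * (kron2 (sg 0) (sg 0) $$ (s, r)
      + complex_of_real \<alpha> * kron2 (sg a) (sg b) $$ (s, r) + complex_of_real \<beta> * kron2 (sg c) (sg e) $$ (s, r))))"
    unfolding T4_def by (intro sum.cong refl) (simp add: Eg_def)
  also have "\<dots> = (1/2) * (T4 X (kron2 (sg 0) (sg 0))
      + complex_of_real \<alpha> * T4 X (kron2 (sg a) (sg b)) + complex_of_real \<beta> * T4 X (kron2 (sg c) (sg e)))"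
    unfolding T4_def by (simp add: sum.distrib sum_distrib_left algebra_simps)
  finally show ?thesis .
qed

lemma Eg_carrier: "Eg a b \<alpha> c e \<beta> \<in> carrier_mat 4 4" unfolding Eg_def by simp

lemma sge_herm: "sge a j i = cnj (sge a i j)"
  unfolding sge_def by auto

lemma Eg_herm: "hermitian 4 (Eg a b \<alpha> c e \<beta>)"
  unfolding hermitian_def
proof (intro conjI allI impI)
  show "Eg a b \<alpha> c e \<beta> \<in> carrier_mat 4 4" by (rule Eg_carrier)
  fix i j :: nat assume "i < 4" "j < 4"
  thus "Eg a b \<alpha> c e \<beta> $$ (j, i) = cnj (Eg a b \<alpha> c e \<beta> $$ (i, j))"
    unfolding Eg_def kron2_def sg_def by (simp add: sge_herm[of _ j i] sge_herm[of _ "j div 2"] sge_herm[of _ "j mod 2"])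
qed

lemma T4_cone: "T4 (mat 4 4 (\<lambda>rc. \<Sum>i<m. kron2 (P i) (Q i) $$ rc)) Y = (\<Sum>i<m. T4 (kron2 (P i) (Q i)) Y)"
proof -
  have "T4 (mat 4 4 (\<lambda>rc. \<Sum>i<m. kron2 (P i) (Q i) $$ rc)) Y
      = (\<Sum>r<4. \<Sum>c<4. (\<Sum>i<m. kron2 (P i) (Q i) $$ (r, c)) * Y $$ (c, r))"
    unfolding T4_def by (intro sum.cong refl) simp
  also have "\<dots> = (\<Sum>i<m. T4 (kron2 (P i) (Q i)) Y)"
    unfolding T4_def sum_distrib_right by (simp add: sum.swap[of _ "{..<m}"])
  finally show ?thesis .
qed

lemma Eg_effect:
  assumes abce: "a < 4" "b < 4" "c < 4" "e < 4"
    and cond: "\<And>p q. valid p \<Longrightarrow> valid q \<Longrightarrow> \<bar>\<alpha> * p a * q b + \<beta> * p c * q e\<bar> \<le> p 0 * q 0"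
  shows "Eg a b \<alpha> c e \<beta> \<in> sep_effects"
  unfolding sep_effects_def
  unfolding mem_Collect_eq
proof (rule conjI[OF Eg_herm], intro ballI)
  fix X assume "X \<in> sep_cone"
  hence "\<exists>(m::nat) P Q. (\<forall>i<m. psd 2 (P i) \<and> psd 2 (Q i)) \<and> X = mat 4 4 (\<lambda>rc. \<Sum>i<m. kron2 (P i) (Q i) $$ rc)"
    unfolding sep_cone_def by simp
  then obtain m :: nat and P Q where PQ: "\<forall>i<m. psd 2 (P i) \<and> psd 2 (Q i)"
    and X: "X = mat 4 4 (\<lambda>rc. \<Sum>i<m. kron2 (P i) (Q i) $$ rc)" by blast
  have cX: "X \<in> carrier_mat 4 4" unfolding X by simp
  have trm: "Im (T4 (kron2 (P i) (Q i)) (Eg a b \<alpha> c e \<beta>)) = 0 \<and>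
      Re (T4 (kron2 (P i) (Q i)) (Eg a b \<alpha> c e \<beta>)) \<ge> 0" if "i < m" for i
  proof -
    define p where "p = (\<lambda>a. Re (t2 (P i) (sg a)))"
    define q where "q = (\<lambda>a. Re (t2 (Q i) (sg a)))"
    have bp: "\<And>a. a < 4 \<Longrightarrow> t2 (P i) (sg a) = of_real (p a)" "valid p"
      using bloch_psd[of "P i"] PQ that unfolding p_def by auto
    have bq: "\<And>a. a < 4 \<Longrightarrow> t2 (Q i) (sg a) = of_real (q a)" "valid q"
      using bloch_psd[of "Q i"] PQ that unfolding q_def by auto
    have eq: "T4 (kron2 (P i) (Q i)) (Eg a b \<alpha> c e \<beta>)
       = of_real ((1/2) * (p 0 * q 0 + \<alpha> * p a * q b + \<beta> * p c * q e))"
      unfolding T4_Eg kron_T4 using abce by (simp add: bp bq algebra_simps)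
    have "\<alpha> * p a * q b + \<beta> * p c * q e \<ge> - (p 0 * q 0)"
      using cond[OF bp(2) bq(2)] by linarith
    thus ?thesis unfolding eq by simp
  qed
  have "mtrace (X * Eg a b \<alpha> c e \<beta>) = (\<Sum>i<m. T4 (kron2 (P i) (Q i)) (Eg a b \<alpha> c e \<beta>))"
  proof -
    have "mtrace (X * Eg a b \<alpha> c e \<beta>) = T4 X (Eg a b \<alpha> c e \<beta>)" by (rule mtrace_T4[OF cX Eg_carrier])
    also have "\<dots> = (\<Sum>i<m. T4 (kron2 (P i) (Q i)) (Eg a b \<alpha> c e \<beta>))" unfolding X by (rule T4_cone)
    finally show ?thesis .
  qed
  thus "Im (mtrace (X * Eg a b \<alpha> c e \<beta>)) = 0 \<and> Re (mtrace (X * Eg a b \<alpha> c e \<beta>)) \<ge> 0"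
    using trm by (auto simp: Im_sum Re_sum intro!: sum_nonneg)
qed


lemma rcs: fixes x0 x1 x2 y0 y1 y2 :: real
  assumes "x1^2 + x2^2 \<le> x0^2" "y1^2 + y2^2 \<le> y0^2" "x0 \<ge> 0" "y0 \<ge> 0"
  shows "\<bar>x1 * y1\<bar> + \<bar>x2 * y2\<bar> \<le> x0 * y0"
proof -
  define a where "a = \<bar>x1\<bar>"
  define b where "b = \<bar>y1\<bar>"
  define c where "c = \<bar>x2\<bar>"
  define d where "d = \<bar>y2\<bar>"
  have id: "(a*b + c*d)^2 = (a^2 + c^2)*(b^2+d^2) - (a*d - c*b)^2"
    by (simp add: power2_eq_square algebra_simps)
  have "(a*b + c*d)^2 \<le> (a^2 + c^2)*(b^2+d^2)" unfolding id by simp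
  also have "(a^2 + c^2)*(b^2+d^2) = (x1^2 + x2^2) * (y1^2 + y2^2)"
    unfolding a_def b_def c_def d_def by simp
  also have "\<dots> \<le> x0^2 * y0^2" by (rule mult_mono) (use assms in auto)
  also have "\<dots> = (x0 * y0)^2" by (simp add: power_mult_distrib)
  finally have "(a*b + c*d)^2 \<le> (x0 * y0)^2" .
  hence "a*b + c*d \<le> x0 * y0" by (rule power2_le_imp_le) (use assms(3,4) in simp)
  thus ?thesis unfolding a_def b_def c_def d_def by (simp add: abs_mult)
qed

lemma valid_two: assumes "valid p" "k \<in> {1,2,3}" "l \<in> {1,2,3::nat}" "k \<noteq> l"
  shows "(p k)^2 + (p l)^2 \<le> (p 0)^2"
proof -
  have nn: "0 \<le> (p 1)^2" "0 \<le> (p 2)^2" "0 \<le> (p 3)^2" by auto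
  have v: "(p 1)^2 + (p 2)^2 + (p 3)^2 \<le> (p 0)^2" using assms(1) unfolding valid_def by simp
  have "k = 1 \<or> k = 2 \<or> k = 3" "l = 1 \<or> l = 2 \<or> l = 3" using assms(2,3) by auto
  thus ?thesis using assms(4) nn v by (elim disjE) (simp_all, (smt (verit) zero_le_power2)+)
qed

lemma valid_one: assumes "valid p" "k \<in> {1,2,3::nat}" shows "\<bar>p k\<bar> \<le> p 0"
proof -
  have nn: "0 \<le> (p 1)^2" "0 \<le> (p 2)^2" "0 \<le> (p 3)^2" by auto
  have v: "(p 1)^2 + (p 2)^2 + (p 3)^2 \<le> (p 0)^2" "p 0 \<ge> 0" using assms(1) unfolding valid_def by simp_all
  have "k = 1 \<or> k = 2 \<or> k = 3" using assms(2) by auto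
  hence "(p k)^2 \<le> (p 0)^2" using nn v by (elim disjE) (simp_all, (smt (verit) zero_le_power2)+)
  thus ?thesis using v(2) by (metis abs_le_square_iff abs_of_nonneg)
qed

lemma famA: assumes "k \<in> {1,2,3}" "l \<in> {1,2,3::nat}" "k \<noteq> l" "\<bar>\<alpha>\<bar> \<le> 1" "\<bar>\<beta>\<bar> \<le> 1"
  shows "Eg k k \<alpha> l l \<beta> \<in> sep_effects"
proof (rule Eg_effect)
  show "k < 4" "k < 4" "l < 4" "l < 4" using assms by auto
  fix p q assume p: "valid p" and q: "valid q"
  have "\<bar>\<alpha> * p k * q k + \<beta> * p l * q l\<bar> \<le> \<bar>\<alpha>\<bar> * \<bar>p k * q k\<bar> + \<bar>\<beta>\<bar> * \<bar>p l * q l\<bar>"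
    by (metis abs_mult abs_triangle_ineq mult.assoc)
  also have "\<dots> \<le> \<bar>p k * q k\<bar> + \<bar>p l * q l\<bar>"
    using assms(4,5) by (intro add_mono) (auto intro: mult_left_le_one_le)
  also have "\<dots> \<le> p 0 * q 0"
    using rcs[OF valid_two[OF p assms(1-3)] valid_two[OF q assms(1-3)]] p q unfolding valid_def by simp
  finally show "\<bar>\<alpha> * p k * q k + \<beta> * p l * q l\<bar> \<le> p 0 * q 0" .
qed

lemma famB: assumes "k \<in> {1,2,3::nat}" "\<bar>\<alpha>\<bar> \<le> 1"
  shows "Eg k 0 \<alpha> 0 0 0 \<in> sep_effects"
proof (rule Eg_effect)
  show "k < 4" "0 < (4::nat)" "0 < (4::nat)" "0 < (4::nat)" using assms by auto
  fix p q assume p: "valid p" and q: "valid q"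
  have "\<bar>\<alpha> * p k * q 0 + 0 * p 0 * q 0\<bar> = \<bar>\<alpha>\<bar> * \<bar>p k\<bar> * q 0"
    using q unfolding valid_def by (simp add: abs_mult)
  also have "\<dots> \<le> 1 * p 0 * q 0"
    using assms(2) valid_one[OF p assms(1)] q unfolding valid_def
    by (intro mult_right_mono mult_mono) auto
  finally show "\<bar>\<alpha> * p k * q 0 + 0 * p 0 * q 0\<bar> \<le> p 0 * q 0" by simp
qed


lemma K00: "kron2 (sg 0) (sg 0) = 1\<^sub>m 4"
proof (rule eq_matI)
  fix i j :: nat assume "i < dim_row (1\<^sub>m 4)" "j < dim_col (1\<^sub>m 4)"
  hence "i < 4" "j < 4" by auto
  hence "i = 0 \<or> i = 1 \<or> i = 2 \<or> i = 3" "j = 0 \<or> j = 1 \<or> j = 2 \<or> j = 3" by auto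
  thus "kron2 (sg 0) (sg 0) $$ (i, j) = 1\<^sub>m 4 $$ (i, j)"
    by (elim disjE) (simp_all add: kron2_def sg_def sge_def)
qed (auto simp: kron2_def)

lemma one_minus_Eg: "1\<^sub>m 4 - Eg a b \<alpha> c e \<beta> = Eg a b (- \<alpha>) c e (- \<beta>)"
proof (rule eq_matI)
  fix i j :: nat assume "i < dim_row (Eg a b (- \<alpha>) c e (- \<beta>))" "j < dim_col (Eg a b (- \<alpha>) c e (- \<beta>))"
  hence ij: "i < 4" "j < 4" by (auto simp: Eg_def)
  have "kron2 (sg 0) (sg 0) $$ (i, j) = 1\<^sub>m 4 $$ (i, j)" by (simp add: K00)
  thus "(1\<^sub>m 4 - Eg a b \<alpha> c e \<beta>) $$ (i, j) = Eg a b (- \<alpha>) c e (- \<beta>) $$ (i, j)"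
    using ij unfolding Eg_def by (simp add: algebra_simps)
qed (auto simp: Eg_def)


lemma A_kron: "A_state (k, b1, b2) = kron2 (pj (ket k b1)) (pj (ket k b2))"
proof (rule eq_matI)
  fix i j :: nat assume "i < dim_row (kron2 (pj (ket k b1)) (pj (ket k b2)))"
    "j < dim_col (kron2 (pj (ket k b1)) (pj (ket k b2)))"
  hence ij: "i < 4" "j < 4" by (auto simp: kron2_def)
  thus "A_state (k, b1, b2) $$ (i, j) = kron2 (pj (ket k b1)) (pj (ket k b2)) $$ (i, j)"
    unfolding A_state_def proj4_def ket2_def kron2_def pj_def by (simp add: algebra_simps)
qed (auto simp: A_state_def proj4_def kron2_def)

lemma val_Eg: assumes "a < 4" "b < 4" "c < 4" "e < 4"
  shows "mtrace (Eg a b \<alpha> c e \<beta> * A_state (k, b1, b2))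
     = complex_of_real ((1/2) * (1 + \<alpha> * bl k b1 a * bl k b2 b + \<beta> * bl k b1 c * bl k b2 e))"
proof -
  have c: "A_state (k, b1, b2) \<in> carrier_mat 4 4" unfolding A_kron kron2_def by simp
  have "mtrace (Eg a b \<alpha> c e \<beta> * A_state (k, b1, b2)) = T4 (Eg a b \<alpha> c e \<beta>) (A_state (k, b1, b2))"
    by (rule mtrace_T4[OF Eg_carrier c])
  also have "\<dots> = T4 (kron2 (pj (ket k b1)) (pj (ket k b2))) (Eg a b \<alpha> c e \<beta>)"
    by (subst T4_comm) (simp add: A_kron)
  also have "\<dots> = complex_of_real ((1/2) * (1 + \<alpha> * bl k b1 a * bl k b2 b + \<beta> * bl k b1 c * bl k b2 e))"
    unfolding T4_Eg kron_T4 using assms by (simp add: bloch_ket bl_def)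
  finally show ?thesis .
qed


lemma pj_psd: "psd 2 (pj v)"
  unfolding psd_def
proof (intro conjI ballI)
  show "pj v \<in> carrier_mat 2 2" unfolding pj_def by simp
  fix w :: "complex vec" assume "w \<in> carrier_vec 2"
  define c where "c = (\<Sum>i<2. cnj (w $ i) * v $ i)"
  have "(\<Sum>i<2. \<Sum>j<2. cnj (w $ i) * pj v $$ (i, j) * w $ j)
      = (\<Sum>i<2. \<Sum>j<2. (cnj (w $ i) * v $ i) * cnj (cnj (w $ j) * v $ j))"
    unfolding pj_def by (intro sum.cong refl) (simp add: mult_ac)
  also have "\<dots> = c * cnj c" unfolding c_def sum_product[symmetric] by (simp add: cnj_sum)
  also have "\<dots> = complex_of_real ((cmod c)^2)" by (rule cnj_sq2)
  finally have e: "(\<Sum>i<2. \<Sum>j<2. cnj (w $ i) * pj v $$ (i, j) * w $ j) = complex_of_real ((cmod c)^2)" .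
  show "Im (\<Sum>i<2. \<Sum>j<2. cnj (w $ i) * pj v $$ (i, j) * w $ j) = 0" unfolding e by simp
  show "Re (\<Sum>i<2. \<Sum>j<2. cnj (w $ i) * pj v $$ (i, j) * w $ j) \<ge> 0" unfolding e by simp
qed


lemma t2_comm: "t2 P R = t2 R P"
  unfolding t2_def by (subst sum.swap) (simp add: mult.commute)

lemma A_sep_state: "A_state s \<in> sep_states"
proof -
  obtain k b1 b2 where s: "s = (k, b1, b2)" by (cases s) auto
  have "A_state s \<in> sep_cone" unfolding sep_cone_def
  proof (intro CollectI exI conjI allI impI)
    show "psd 2 ((\<lambda>_. pj (ket k b1)) i)" "psd 2 ((\<lambda>_. pj (ket k b2)) i)" for i by (simp_all add: pj_psd)
    have s1: "\<And>f. (\<Sum>i<(1::nat). f i) = (f 0 :: complex)" by simp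
    show "A_state s = mat 4 4 (\<lambda>rc. \<Sum>i<(1::nat). kron2 ((\<lambda>_. pj (ket k b1)) i) ((\<lambda>_. pj (ket k b2)) i) $$ rc)"
      unfolding s A_kron s1 by (rule eq_matI) (auto simp: kron2_def)
  qed
  moreover have "mtrace (A_state s) = 1"
  proof -
    have "mtrace (A_state s) = mtrace (kron2 (sg 0) (sg 0) * A_state s)"
      unfolding K00 s A_kron by (simp add: kron2_def)
    also have "\<dots> = T4 (kron2 (sg 0) (sg 0)) (A_state s)"
      by (rule mtrace_T4) (simp_all add: kron2_def s A_kron)
    also have "\<dots> = t2 (pj (ket k b1)) (sg 0) * t2 (pj (ket k b2)) (sg 0)"
      unfolding s A_kron kron_T4 by (simp add: t2_comm)
    also have "\<dots> = 1" by (simp add: bloch_ket bl_def)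
    finally show ?thesis .
  qed
  ultimately show ?thesis unfolding sep_states_def by simp
qed



lemma ix_in: "ix k \<in> {1,2,3}" by (cases k) (auto simp: ix_def)
lemma ix_inj: "k \<noteq> l \<Longrightarrow> ix k \<noteq> ix l" by (cases k; cases l) (auto simp: ix_def)
lemma ix_lt: "ix k < 4" by (cases k) (auto simp: ix_def)
lemma ix_nz: "ix k \<noteq> 0" by (cases k) (auto simp: ix_def)

definition oth :: "pauli \<Rightarrow> nat" where "oth k = (if ix k = 1 then 2 else 1)"
lemma oth_in: "oth k \<in> {1,2,3}" by (simp add: oth_def)
lemma oth_ne: "oth k \<noteq> ix k" by (simp add: oth_def)
lemma oth_lt: "oth k < 4" by (simp add: oth_def)

lemma bl_0: "bl k b 0 = 1" by (simp add: bl_def)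
lemma bl_ix: "bl k b (ix k) = sgnb b" using ix_nz[of k] by (simp add: bl_def)
lemma bl_other: "k \<noteq> l \<Longrightarrow> bl k b (ix l) = 0" using ix_nz[of l] ix_inj[of k l] by (simp add: bl_def)
lemma bl_oth: "bl k b (oth k) = 0" using oth_ne by (simp add: bl_def oth_def)

lemma sgnb_sq: "sgnb b * sgnb b = 1" by (simp add: sgnb_def)
lemma sgnb_abs: "\<bar>sgnb b\<bar> \<le> 1" by (simp add: sgnb_def)
lemma sgnb_abs2: "\<bar>sgnb b * sgnb c\<bar> \<le> 1" by (simp add: sgnb_def)

lemma distinguish:
  assumes "i \<noteq> j"
  shows "\<exists>E. E \<in> sep_effects \<and> 1\<^sub>m 4 - E \<in> sep_effects \<and>
             mtrace (E * A_state i) = 1 \<and> mtrace (E * A_state j) = 0"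
proof -
  obtain k b1 b2 where i: "i = (k, b1, b2)" by (cases i) auto
  obtain l c1 c2 where j: "j = (l, c1, c2)" by (cases j) auto
  show ?thesis
  proof (cases "k = l")
    case False
    define \<alpha> where "\<alpha> = sgnb b1 * sgnb b2"
    define \<beta> where "\<beta> = - (sgnb c1 * sgnb c2)"
    define E where "E = Eg (ix k) (ix k) \<alpha> (ix l) (ix l) \<beta>"
    have "E \<in> sep_effects" unfolding E_def
      by (rule famA[OF ix_in ix_in ix_inj[OF False]]) (simp_all add: \<alpha>_def \<beta>_def sgnb_abs2)
    moreover have "1\<^sub>m 4 - E \<in> sep_effects" unfolding E_def one_minus_Eg
      by (rule famA[OF ix_in ix_in ix_inj[OF False]]) (simp_all add: \<alpha>_def \<beta>_def sgnb_abs2)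
    moreover have "mtrace (E * A_state i) = 1" unfolding E_def i
      by (subst val_Eg) (simp_all add: ix_lt bl_ix bl_other[OF False] \<alpha>_def sgnb_def)
    moreover have "mtrace (E * A_state j) = 0" unfolding E_def j
      using False by (subst val_Eg) (simp_all add: ix_lt bl_ix bl_other \<beta>_def sgnb_def)
    ultimately show ?thesis by blast
  next
    case True
    show ?thesis
    proof (cases "sgnb b1 * sgnb b2 = sgnb c1 * sgnb c2")
      case False
      define \<alpha> where "\<alpha> = sgnb b1 * sgnb b2"
      define E where "E = Eg (ix k) (ix k) \<alpha> (oth k) (oth k) 0"
      have fa: "Eg (ix k) (ix k) a (oth k) (oth k) b \<in> sep_effects" if "\<bar>a\<bar> \<le> 1" "\<bar>b\<bar> \<le> 1" for a b
        by (rule famA[OF ix_in oth_in oth_ne[symmetric] that])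
      have "E \<in> sep_effects" unfolding E_def by (rule fa) (simp_all add: \<alpha>_def sgnb_abs2)
      moreover have "1\<^sub>m 4 - E \<in> sep_effects" unfolding E_def one_minus_Eg
        by (rule fa) (simp_all add: \<alpha>_def sgnb_abs2)
      moreover have "mtrace (E * A_state i) = 1" unfolding E_def i
        by (subst val_Eg) (simp_all add: ix_lt oth_lt bl_ix bl_oth \<alpha>_def sgnb_def)
      moreover have "mtrace (E * A_state j) = 0" unfolding E_def j
        using True False by (subst val_Eg)
          (simp_all add: ix_lt oth_lt bl_ix bl_oth \<alpha>_def, auto simp: sgnb_def split: if_splits)
      ultimately show ?thesis by blast
    next
      case eqs: True
      have "b1 \<noteq> c1"
      proof
        assume "b1 = c1"
        hence "b2 = c2" using eqs by (cases b1; cases b2; cases c2) (auto simp: sgnb_def)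
        thus False using \<open>b1 = c1\<close> True assms i j by simp
      qed
      define E where "E = Eg (ix k) 0 (sgnb b1) 0 0 0"
      have "E \<in> sep_effects" unfolding E_def by (rule famB[OF ix_in sgnb_abs])
      moreover have "1\<^sub>m 4 - E \<in> sep_effects" unfolding E_def one_minus_Eg
        using famB[OF ix_in, of "- sgnb b1" k] sgnb_abs[of b1] by simp
      moreover have "mtrace (E * A_state i) = 1" unfolding E_def i
        by (subst val_Eg) (simp_all add: ix_lt bl_ix bl_0 sgnb_def)
      moreover have "mtrace (E * A_state j) = 0" unfolding E_def j
        using True \<open>b1 \<noteq> c1\<close> by (subst val_Eg) (simp_all add: ix_lt bl_ix bl_0, auto simp: sgnb_def)
      ultimately show ?thesis by blast
    qed
  qed
qed

lemma sep_dist: "sep_pairwise_distinguishable (UNIV :: (pauli \<times> bool \<times> bool) set) A_state"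
  unfolding sep_pairwise_distinguishable_def using distinguish by blast

lemma mtrace_one_minus:
  assumes "E \<in> carrier_mat 4 4" "X \<in> carrier_mat 4 4"
  shows "mtrace ((1\<^sub>m 4 - E) * X) = mtrace X - mtrace (E * X)"
proof -
  have "mtrace ((1\<^sub>m 4 - E) * X) = T4 (1\<^sub>m 4 - E) X" by (rule mtrace_T4) (use assms in auto)
  also have "\<dots> = (\<Sum>r<4. \<Sum>c<4. (if r = c then X $$ (c, r) else 0)) - T4 E X"
  proof -
    have "T4 (1\<^sub>m 4 - E) X = (\<Sum>r<4. \<Sum>c<4. (if r = c then X $$ (c, r) else 0) - E $$ (r, c) * X $$ (c, r))"
      unfolding T4_def using assms by (intro sum.cong refl) (auto simp: left_diff_distrib)
    thus ?thesis unfolding T4_def by (simp add: sum_subtractf)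
  qed
  also have "(\<Sum>r<4. \<Sum>c<4. (if r = c then X $$ (c, r) else 0)) = mtrace X"
    using assms by (simp add: mtrace_sum)
  finally show ?thesis using mtrace_T4[OF assms] by simp
qed

definition enc :: "nat \<Rightarrow> pauli \<times> bool \<times> bool" where
  "enc n = (if n < 4 then PX else if n < 8 then PY else PZ, odd (n div 2), odd n)"

lemma enc_inj: assumes "n < 12" "m < 12" "enc n = enc m" shows "n = m"
proof -
  have "(n < 4 \<longleftrightarrow> m < 4) \<and> (n < 8 \<longleftrightarrow> m < 8) \<and> (odd (n div 2) \<longleftrightarrow> odd (m div 2)) \<and> (odd n \<longleftrightarrow> odd m)"
    using assms(3) unfolding enc_def by (auto split: if_splits)
  thus ?thesis using assms(1,2) by presburger
qed

lemma sep_win: "wins_PD 12 4 sep_states sep_effects"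
  unfolding wins_PD_def
proof (rule exI[of _ "\<lambda>\<eta>. A_state (enc \<eta>)"], intro conjI allI impI)
  fix \<eta> show "A_state (enc \<eta>) \<in> sep_states" by (rule A_sep_state)
next
  fix \<eta> \<eta>' :: nat assume h: "\<eta> < 12" "\<eta>' < 12" "\<eta> \<noteq> \<eta>'"
  hence "enc \<eta> \<noteq> enc \<eta>'" using enc_inj by blast
  then obtain E0 where E0: "E0 \<in> sep_effects" "1\<^sub>m 4 - E0 \<in> sep_effects"
     "mtrace (E0 * A_state (enc \<eta>)) = 1" "mtrace (E0 * A_state (enc \<eta>')) = 0"
    using distinguish by blast
  have cE: "E0 \<in> carrier_mat 4 4" using E0(1) unfolding sep_effects_def hermitian_def by simp
  have cA: "A_state s \<in> carrier_mat 4 4" for s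
    by (cases s) (simp add: A_kron kron2_def)
  have tA: "mtrace (A_state s) = 1" for s using A_sep_state[of s] unfolding sep_states_def by simp
  show "\<exists>E. E \<eta> \<in> sep_effects \<and> E \<eta>' \<in> sep_effects \<and> E \<eta> + E \<eta>' = 1\<^sub>m 4 \<and>
           mtrace (E \<eta> * A_state (enc \<eta>)) = 1 \<and> mtrace (E \<eta>' * A_state (enc \<eta>')) = 1"
  proof (rule exI[of _ "\<lambda>m. if m = \<eta> then E0 else 1\<^sub>m 4 - E0"], intro conjI)
    show "(if \<eta> = \<eta> then E0 else 1\<^sub>m 4 - E0) \<in> sep_effects" using E0 by simp
    show "(if \<eta>' = \<eta> then E0 else 1\<^sub>m 4 - E0) \<in> sep_effects" using E0 h by simp
    show "(if \<eta> = \<eta> then E0 else 1\<^sub>m 4 - E0) + (if \<eta>' = \<eta> then E0 else 1\<^sub>m 4 - E0) = 1\<^sub>m 4"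
      using h cE by (auto intro!: eq_matI)
    show "mtrace ((if \<eta> = \<eta> then E0 else 1\<^sub>m 4 - E0) * A_state (enc \<eta>)) = 1" using E0 by simp
    show "mtrace ((if \<eta>' = \<eta> then E0 else 1\<^sub>m 4 - E0) * A_state (enc \<eta>')) = 1"
      using h E0 mtrace_one_minus[OF cE cA] tA by simp
  qed
qed


theorem theorem1:
  shows "(\<not> wins_PD_qubits 12 3 \<and> wins_PD_qubits 12 4 \<and>
          (\<forall>k. wins_PD_qubits 12 k \<longrightarrow> 4 \<le> k))
       \<and> (sep_pairwise_distinguishable (UNIV :: (pauli \<times> bool \<times> bool) set) A_state
          \<and> wins_PD 12 4 sep_states sep_effects)"
  using part1 sep_dist sep_win by blast

end
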